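(* Consider the Markovian switching system $x_{k+1}=f(x_k,u_k,\theta_k)$ with constraints $(x_k,u_k)\in Y_{\theta_k}$, stage cost $\ell$, and suppose the controllability assumption below holds (together with the well-posedness assumption). Let $X_N\subseteq\mathbb{R}^n\times\mathcal{N}$ be the set of pairs $(x,\theta)$ for which the EMPC problem $\mathbb{P}(x,\theta)$ is feasible, and let $\kappa_N$ be the associated receding horizon control law. If $\mathbb{P}(x_k,\theta_k)$ is feasible, then $\mathbb{P}(x_{k+1},\theta_{k+1})$ is feasible, where $x_{k+1}=f(x_k,\kappa_N(x_k,\theta_k),\theta_k)$ and $\theta_{k+1}$ is any element of $\mathcal{C}(\theta_k)$.
   Context: Let $\mathcal{N}=\{1,\dots,\nu\}$ and let $\{\theta_k\}_{k\ge 0}$ be a time-homogeneous Markov chain on $\mathcal{N}$ with transition matrix $P=(p_{ij})$ and initial distribution $v$, defined on a filtered probability space $(\Omega,\mathfrak{F},\{\mathfrak{F}_k\}_k,\mathbb{P})$, where $\mathfrak{F}_k$ is the $\sigma$-algebra generated by the history of states, inputs and modes up to time $k$. The system is $x_{k+1}=f(x_k,u_k,\theta_k)$ with $x_k\in\mathbb{R}^n$, $u_k\in\mathbb{R}^m$; at time $k$ both $x_k$ and $\theta_k$ are measured. Constraints: $(x_k,u_k)\in Y_{\theta_k}$, $Y_\theta\subseteq\mathbb{R}^n\times\mathbb{R}^m$. Stage cost $\ell:\mathbb{R}^n\times\mathbb{R}^m\times\mathcal{N}\to\mathbb{R}$. Write $u\lhd\mathfrak{F}_k$ to mean that the random variable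 $u$ is $\mathfrak{F}_k$-measurable. The cover of $i\in\mathcal{N}$ is $\mathcal{C}(i)=\{j\in\mathcal{N}: p_{ij}>0\}$; a bet node of $i$ is some $\mathrm{bet}(i)\in\mathcal{C}(i)$ with $p_{i\,\mathrm{bet}(i)}\ge p_{ij}$ for all $j\in\mathcal{C}(i)$. Well-posedness assumption: for each $\theta$, $\ell(\cdot,\cdot,\theta)$ is nonnegative, lower semicontinuous and level-bounded in $u$ locally uniformly in $x$ (for every $\bar x$ there is a neighbourhood $V$ of $\bar x$ such that $\{(x,u):x\in V,\ \ell(x,u,\theta)\le\alpha\}$ is bounded for every $\alpha$); $f(\cdot,\cdot,\theta)$ is continuous; $Y_\theta$ is nonempty and compact; $\{\theta_k\}$ is irreducible and aperiodic. Optimal steady states: $(x_s^\theta,u_s^\theta)$ is a minimizer of $\ell_s(\theta):=\min_{x,u}\{\ell(x,u,\theta): f(x,u,\theta)=x,\ (x,u)\in Y_\theta\}$. Controllability assumption: for all $i,j\in\mathcal{N}$ there is a control law $\bar u_s:\mathbb{R}^n\times\mathcal{N}\to\mathbb{R}^m$ with $\bar u_s(x_s^i,j)=\bar u_s^{i,j}$ such that $(x_s^i,\bar u_s^{i,j})\in Y_j$ and $f(x_s^i,\bar u_s^{i,j},j)=x_s^{\mathrm{bet}(j)}$. EMPC problem $\mathbb{P}(x,\theta)$: $V_N^\star(x,\theta)=\inf_{\mathbf{u}_N}V_N(x,\theta,\mathbf{u}_N)$, where $\mathbf{u}_N=(u_0,\dots,u_{N-1})$ and $V_N(x_0,\theta_0,\mathbf{u}_N)=\mathbb{E}[\sum_{j=0}^{N-1}\ell(x_j,u_j,\theta_j)\mid\mathfrak{F}_0]$,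 subject to, for $k=0,\dots,N-1$: $x_{k+1}=f(x_k,u_k,\theta_k)$, $(x_k,u_k)\in Y_{\theta_k}$, $(x_0,\theta_0)=(x,\theta)$, $x_N=x_s^{\mathrm{bet}(\theta_{N-1})}$, $u_k\lhd\mathfrak{F}_k$. If $\mathbf{u}^\star(x,\theta)=(u_0^\star(x,\theta),\dots)$ is an optimizer, the receding horizon law is $\kappa_N(x,\theta)=u_0^\star(x,\theta)$. *)

theory Defs
  imports "HOL-Analysis.Analysis"
begin

definition modes :: "nat \<Rightarrow> nat set" where
  "modes nu = {1..nu}"

definition stochastic_matrix :: "nat \<Rightarrow> (nat \<Rightarrow> nat \<Rightarrow> real) \<Rightarrow> bool" where
  "stochastic_matrix nu p \<longleftrightarrow>
     (\<forall>i\<in>modes nu. \<forall>j\<in>modes nu. p i j \<ge> 0) \<and>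
     (\<forall>i\<in>modes nu. (\<Sum>j\<in>modes nu. p i j) = 1)"

fun mpow :: "nat \<Rightarrow> (nat \<Rightarrow> nat \<Rightarrow> real) \<Rightarrow> nat \<Rightarrow> nat \<Rightarrow> nat \<Rightarrow> real" where
  "mpow nu p 0 i j = (if i = j then 1 else 0)"
| "mpow nu p (Suc k) i j = (\<Sum>l\<in>modes nu. mpow nu p k i l * p l j)"

definition irreducible_chain :: "nat \<Rightarrow> (nat \<Rightarrow> nat \<Rightarrow> real) \<Rightarrow> bool" where
  "irreducible_chain nu p \<longleftrightarrow>
     (\<forall>i\<in>modes nu. \<forall>j\<in>modes nu. \<exists>k>0. mpow nu p k i j > 0)"

definition aperiodic_chain :: "nat \<Rightarrow> (nat \<Rightarrow> nat \<Rightarrow> real) \<Rightarrow> bool" where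
  "aperiodic_chain nu p \<longleftrightarrow>
     (\<forall>i\<in>modes nu. Gcd {k. k > 0 \<and> mpow nu p k i i > 0} = 1)"

definition cover :: "nat \<Rightarrow> (nat \<Rightarrow> nat \<Rightarrow> real) \<Rightarrow> nat \<Rightarrow> nat set" where
  "cover nu p i = {j\<in>modes nu. p i j > 0}"

definition is_bet :: "nat \<Rightarrow> (nat \<Rightarrow> nat \<Rightarrow> real) \<Rightarrow> (nat \<Rightarrow> nat) \<Rightarrow> bool" where
  "is_bet nu p bet \<longleftrightarrow>
     (\<forall>i\<in>modes nu. bet i \<in> cover nu p i \<and> (\<forall>j\<in>cover nu p i. p i (bet i) \<ge> p i j))"

definition lsc :: "('a::topological_space \<Rightarrow> real) \<Rightarrow> bool" where
  "lsc g \<longleftrightarrow> (\<forall>z. \<forall>e>0. \<forall>\<^sub>F w in nhds z. g z - e < g w)"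

definition level_bounded_loc_unif ::
    "('x::metric_space \<Rightarrow> 'u::metric_space \<Rightarrow> real) \<Rightarrow> bool" where
  "level_bounded_loc_unif g \<longleftrightarrow>
     (\<forall>xb. \<exists>V. open V \<and> xb \<in> V \<and>
        (\<forall>\<alpha>::real. bounded {(x, u). x \<in> V \<and> g x u \<le> \<alpha>}))"

definition optimal_steady_state ::
    "('x \<Rightarrow> 'u \<Rightarrow> nat \<Rightarrow> real) \<Rightarrow> ('x \<Rightarrow> 'u \<Rightarrow> nat \<Rightarrow> 'x) \<Rightarrow> (nat \<Rightarrow> ('x \<times> 'u) set)
      \<Rightarrow> nat \<Rightarrow> 'x \<Rightarrow> 'u \<Rightarrow> bool" where
  "optimal_steady_state l f Y th xs us \<longleftrightarrow>
     f xs us th = xs \<and> (xs, us) \<in> Y th \<and>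
     (\<forall>x u. f x u th = x \<and> (x, u) \<in> Y th \<longrightarrow> l xs us th \<le> l x u th)"

text \<open>Policies: since x_0 is fixed and the dynamics are deterministic, an
  F_k-measurable input u_k is a function of the mode history [theta_0,...,theta_k].
  A policy is therefore a map from mode histories (lists) to inputs.
  traj f u x0 k hs is the state x_k along the mode path hs (hs ! i = theta_i).\<close>
fun traj :: "('x \<Rightarrow> 'u \<Rightarrow> nat \<Rightarrow> 'x) \<Rightarrow> (nat list \<Rightarrow> 'u) \<Rightarrow> 'x \<Rightarrow> nat \<Rightarrow> nat list \<Rightarrow> 'x" where
  "traj f u x0 0 hs = x0"
| "traj f u x0 (Suc k) hs = f (traj f u x0 k hs) (u (take (Suc k) hs)) (hs ! k)"

definition all_paths :: "nat \<Rightarrow> nat \<Rightarrow> nat \<Rightarrow> nat list set" where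
  "all_paths nu N th = {hs. length hs = N \<and> set hs \<subseteq> modes nu \<and> hs ! 0 = th}"

definition path_prob :: "(nat \<Rightarrow> nat \<Rightarrow> real) \<Rightarrow> nat list \<Rightarrow> real" where
  "path_prob p hs = (\<Prod>i<length hs - 1. p (hs ! i) (hs ! Suc i))"

definition adm_paths :: "nat \<Rightarrow> (nat \<Rightarrow> nat \<Rightarrow> real) \<Rightarrow> nat \<Rightarrow> nat \<Rightarrow> nat list set" where
  "adm_paths nu p N th = {hs \<in> all_paths nu N th. \<forall>i. Suc i < N \<longrightarrow> p (hs ! i) (hs ! Suc i) > 0}"

text \<open>Feasibility of a policy for P(x,theta): constraints hold almost surely.\<close>
definition feasible_policy where
  "feasible_policy nu p f Y xs bet N x th u \<longleftrightarrow>
     (\<forall>hs\<in>adm_paths nu p N th.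
        (\<forall>k<N. (traj f u x k hs, u (take (Suc k) hs)) \<in> Y (hs ! k)) \<and>
        traj f u x N hs = xs (bet (hs ! (N - 1))))"

text \<open>Cost V_N(x,theta,u) = E[sum_{j<N} l(x_j,u_j,theta_j) | F_0].\<close>
definition cost_VN where
  "cost_VN nu p f l N x th u =
     (\<Sum>hs\<in>all_paths nu N th. path_prob p hs *
        (\<Sum>k<N. l (traj f u x k hs) (u (take (Suc k) hs)) (hs ! k)))"

definition optimal_policy where
  "optimal_policy nu p f Y l xs bet N x th u \<longleftrightarrow>
     feasible_policy nu p f Y xs bet N x th u \<and>
     (\<forall>u'. feasible_policy nu p f Y xs bet N x th u' \<longrightarrow>
        cost_VN nu p f l N x th u \<le> cost_VN nu p f l N x th u')"

definition XN where
  "XN nu p f Y xs bet N = {(x, th). th \<in> modes nu \<and> (\<exists>u. feasible_policy nu p f Y xs bet N x th u)}"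

end

theory Submission
  imports Defs
begin


lemma traj_take: "k \<le> n \<Longrightarrow> traj f u x k (take n hs) = traj f u x k hs"
proof (induction k)
  case (Suc k)
  then show ?case by (simp add: min_def)
qed simp

lemma traj_shift:
  assumes "\<And>ys. length ys < N \<Longrightarrow> v ys = u (th # ys)"
  shows "k \<le> N - 1 \<Longrightarrow> length hs = N \<Longrightarrow> traj f v (f x (u [th]) th) k hs = traj f u x (Suc k) (th # hs)"
proof (induction k)
  case 0
  then show ?case by simp
next
  case (Suc k)
  then have "length (take (Suc k) hs) < N" by simp
  then have "v (take (Suc k) hs) = u (take (Suc (Suc k)) (th # hs))" using assms by simp
  with Suc show ?case by simp
qed

theorem proposition1:
  fixes nu N :: nat
    and p :: "nat \<Rightarrow> nat \<Rightarrow> real"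
    and f :: "real^'n \<Rightarrow> real^'m \<Rightarrow> nat \<Rightarrow> real^'n"
    and Y :: "nat \<Rightarrow> ((real^'n) \<times> (real^'m)) set"
    and l :: "real^'n \<Rightarrow> real^'m \<Rightarrow> nat \<Rightarrow> real"
    and xs :: "nat \<Rightarrow> real^'n" and us :: "nat \<Rightarrow> real^'m"
    and bet :: "nat \<Rightarrow> nat"
    and u :: "nat list \<Rightarrow> real^'m"
    and x :: "real^'n" and th th' :: nat
  assumes nu: "nu \<ge> 1" and N: "N \<ge> 1"
    and P: "stochastic_matrix nu p"
    and irr: "irreducible_chain nu p" and aper: "aperiodic_chain nu p"
    and l_nonneg: "\<forall>i\<in>modes nu. \<forall>x u. l x u i \<ge> 0"
    and l_lsc: "\<forall>i\<in>modes nu. lsc (\<lambda>z. l (fst z) (snd z) i)"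
    and l_lb: "\<forall>i\<in>modes nu. level_bounded_loc_unif (\<lambda>x u. l x u i)"
    and f_cont: "\<forall>i\<in>modes nu. continuous_on UNIV (\<lambda>z. f (fst z) (snd z) i)"
    and Y_ne: "\<forall>i\<in>modes nu. Y i \<noteq> {}" and Y_cpt: "\<forall>i\<in>modes nu. compact (Y i)"
    and ss: "\<forall>i\<in>modes nu. optimal_steady_state l f Y i (xs i) (us i)"
    and bet: "is_bet nu p bet"
    and ctrb: "\<exists>ubar :: real^'n \<Rightarrow> nat \<Rightarrow> real^'m. \<forall>i\<in>modes nu. \<forall>j\<in>modes nu.
                 (xs i, ubar (xs i) j) \<in> Y j \<and> f (xs i) (ubar (xs i) j) j = xs (bet j)"
    and feas: "(x, th) \<in> XN nu p f Y xs bet N"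
    and opt: "optimal_policy nu p f Y l xs bet N x th u"
    and th': "th' \<in> cover nu p th"
  shows "(f x (u [th]) th, th') \<in> XN nu p f Y xs bet N"
proof -
  obtain ubar :: "real^'n \<Rightarrow> nat \<Rightarrow> real^'m" where ub: "\<forall>i\<in>modes nu. \<forall>j\<in>modes nu.
                 (xs i, ubar (xs i) j) \<in> Y j \<and> f (xs i) (ubar (xs i) j) j = xs (bet j)"
    using ctrb by blast
  have thmo: "th \<in> modes nu" using feas by (simp add: XN_def)
  have pth: "p th th' > 0" and th'm: "th' \<in> modes nu" using th' by (auto simp: cover_def)
  have fu: "feasible_policy nu p f Y xs bet N x th u" using opt by (simp add: optimal_policy_def)
  define v where "v ys = (if length ys < N then u (th # ys) else ubar (traj f u x N (th # ys)) (ys ! (N - 1)))" for ys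
  have vsh: "\<And>ys. length ys < N \<Longrightarrow> v ys = u (th # ys)" by (simp add: v_def)
  have "feasible_policy nu p f Y xs bet N (f x (u [th]) th) th' v"
    unfolding feasible_policy_def
  proof
    fix hs assume hs: "hs \<in> adm_paths nu p N th'"
    have len: "length hs = N" and hsm: "set hs \<subseteq> modes nu" and h0: "hs ! 0 = th'"
      and htr: "\<And>i. Suc i < N \<Longrightarrow> p (hs ! i) (hs ! Suc i) > 0"
      using hs by (auto simp: adm_paths_def all_paths_def)
    define gs where "gs = take N (th # hs)"
    have gs_adm: "gs \<in> adm_paths nu p N th"
      unfolding adm_paths_def all_paths_def
    proof (intro CollectI conjI allI impI)
      show "length gs = N" using len N by (simp add: gs_def)
      show "set gs \<subseteq> modes nu" using hsm thmo set_take_subset[of N "th # hs"] by (auto simp: gs_def)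
      show "gs ! 0 = th" using N by (simp add: gs_def)
      fix i assume i: "Suc i < N"
      show "p (gs ! i) (gs ! Suc i) > 0"
      proof (cases i)
        case 0 then show ?thesis using i pth h0 by (simp add: gs_def)
      next
        case (Suc j) then show ?thesis using i htr[of j] by (simp add: gs_def)
      qed
    qed
    have gsf: "(\<forall>k<N. (traj f u x k gs, u (take (Suc k) gs)) \<in> Y (gs ! k)) \<and>
        traj f u x N gs = xs (bet (gs ! (N - 1)))"
      using fu gs_adm by (simp add: feasible_policy_def)
    have tr: "\<And>k. k \<le> N \<Longrightarrow> traj f u x k gs = traj f u x k (th # hs)"
      unfolding gs_def by (rule traj_take)
    have sh: "traj f v (f x (u [th]) th) k hs = traj f u x (Suc k) (th # hs)" if "k \<le> N - 1" for k
      by (rule traj_shift[where N=N and v=v and u=u and th=th, OF vsh that len])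
    have lastm: "hs ! (N - 1) \<in> modes nu" using hsm len N by (simp add: subset_iff)
    define b where "b = gs ! (N - 1)"
    have bm: "b \<in> modes nu" using gs_adm N unfolding b_def adm_paths_def all_paths_def
      by (auto simp: subset_iff)
    have betm: "bet b \<in> modes nu" using bet bm by (auto simp: is_bet_def cover_def)
    have xN: "traj f u x N (th # hs) = xs (bet b)" using gsf tr[of N] by (simp add: b_def)
    have stN: "traj f v (f x (u [th]) th) (N - 1) hs = xs (bet b)"
      using sh[of "N - 1"] xN N by simp
    have vN: "v (take (Suc (N - 1)) hs) = ubar (xs (bet b)) (hs ! (N - 1))"
      using len N xN by (simp add: v_def)
    show "(\<forall>k<N. (traj f v (f x (u [th]) th) k hs, v (take (Suc k) hs)) \<in> Y (hs ! k)) \<and>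
        traj f v (f x (u [th]) th) N hs = xs (bet (hs ! (N - 1)))"
    proof (intro conjI allI impI)
      fix k assume k: "k < N"
      show "(traj f v (f x (u [th]) th) k hs, v (take (Suc k) hs)) \<in> Y (hs ! k)"
      proof (cases "Suc k < N")
        case True
        have "(traj f u x (Suc k) gs, u (take (Suc (Suc k)) gs)) \<in> Y (gs ! Suc k)"
          using gsf True by blast
        moreover have "traj f u x (Suc k) gs = traj f u x (Suc k) (th # hs)" by (rule tr) (use True in simp)
        moreover have "take (Suc (Suc k)) gs = th # take (Suc k) hs" using True by (simp add: gs_def min_def)
        moreover have "gs ! Suc k = hs ! k" using True by (simp add: gs_def)
        moreover have "v (take (Suc k) hs) = u (th # take (Suc k) hs)" using vsh len True by simp
        ultimately show ?thesis using sh[of k] True by simp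
      next
        case False
        then have kk: "k = N - 1" using k by simp
        have "(xs (bet b), ubar (xs (bet b)) (hs ! (N - 1))) \<in> Y (hs ! (N - 1))"
          using ub betm lastm by blast
        then show ?thesis using stN vN kk by simp
      qed
    next
      have "traj f v (f x (u [th]) th) N hs = traj f v (f x (u [th]) th) (Suc (N - 1)) hs" using N by simp
      also have "\<dots> = f (xs (bet b)) (ubar (xs (bet b)) (hs ! (N - 1))) (hs ! (N - 1))"
        using stN vN by simp
      also have "\<dots> = xs (bet (hs ! (N - 1)))" using ub betm lastm by blast
      finally show "traj f v (f x (u [th]) th) N hs = xs (bet (hs ! (N - 1)))" .
    qed
  qed
  then show ?thesis using th'm by (auto simp: XN_def)
qed

end
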